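(* For every $\epsilon$ with $0<\epsilon<1/4$ and every integer $k\ge 1$, $$R(K_4^*,k)\le (1+\epsilon)^k\epsilon^{-1}k!.$$ In particular, $R(K_4^*,k)\le (k-1)e(1+o(1))k!$ as $k\to\infty$.
   Context: For a family $\mathcal{G}$ of graphs, $R(\mathcal{G},k)$ is the smallest $n$ such that every coloring of the edges of $K_n$ with $k$ colors contains a monochromatic subgraph isomorphic to some member of $\mathcal{G}$. $K_4^*$ is the family of graphs consisting of: $K_4$; the graph obtained from $K_4$ minus an edge by attaching a pendant edge at one of its two vertices of degree $2$; and the triangle with a pendant edge attached at each of its three vertices. (Equivalently, for a vertex $v$ of $K_4$ with neighbors $q_1,q_2,q_3$, $K_4^*$ is the family of graphs obtained from the triangle $K_4-v$ by adding, for each $i$, an edge $q_ir_i$ not in the triangle, with $r_i$ a vertex of the triangle or a new vertex, new vertices possibly shared, the three added edges pairwise distinct.) *)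

theory Defs
  imports Complex_Main
begin

text \<open>A pattern graph is given by a number m of vertices {0..<m} and a list of edges.\<close>
type_synonym pattern = "nat \<times> (nat \<times> nat) list"

definition edge_colouring :: "nat \<Rightarrow> nat \<Rightarrow> (nat \<Rightarrow> nat \<Rightarrow> nat) \<Rightarrow> bool" where
  "edge_colouring n k c \<longleftrightarrow>
     (\<forall>u<n. \<forall>v<n. u \<noteq> v \<longrightarrow> c u v = c v u \<and> c u v < k)"

definition mono_copy :: "nat \<Rightarrow> (nat \<Rightarrow> nat \<Rightarrow> nat) \<Rightarrow> pattern \<Rightarrow> bool" where
  "mono_copy n c H \<longleftrightarrow>
     (\<exists>f col. inj_on f {..<fst H} \<and> f ` {..<fst H} \<subseteq> {..<n} \<and>
        (\<forall>(a,b) \<in> set (snd H). c (f a) (f b) = col))"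

definition ramsey_family :: "pattern set \<Rightarrow> nat \<Rightarrow> nat" where
  "ramsey_family \<G> k = (LEAST n. \<forall>c. edge_colouring n k c \<longrightarrow> (\<exists>H\<in>\<G>. mono_copy n c H))"

definition K4 :: pattern where
  "K4 = (4, [(0,1),(0,2),(0,3),(1,2),(1,3),(2,3)])"

text \<open>K_4 minus the edge 23, with a pendant edge 24 at the degree-2 vertex 2.\<close>
definition K4_minus_pendant :: pattern where
  "K4_minus_pendant = (5, [(0,1),(0,2),(0,3),(1,2),(1,3),(2,4)])"

text \<open>Triangle 012 with pendant edges 03, 14, 25.\<close>
definition triangle_three_pendants :: pattern where
  "triangle_three_pendants = (6, [(0,1),(1,2),(0,2),(0,3),(1,4),(2,5)])"

definition K4_star :: "pattern set" where
  "K4_star = {K4, K4_minus_pendant, triangle_three_pendants}"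

end

theory Submission
  imports Defs
begin

definition PP :: "nat \<Rightarrow> nat \<Rightarrow> bool" where
  "PP n k \<longleftrightarrow> (\<forall>c. edge_colouring n k c \<longrightarrow> (\<exists>H\<in>K4_star. mono_copy n c H))"

lemma mono_copyI:
  assumes "distinct xs" "set xs \<subseteq> {..<n}" "fst H = length xs"
    "\<forall>(u,w)\<in>set (snd H). c (xs!u) (xs!w) = col"
  shows "mono_copy n c H"
  unfolding mono_copy_def
proof (intro exI conjI)
  show "inj_on (nth xs) {..<fst H}" using assms by (simp add: inj_on_nth)
  show "nth xs ` {..<fst H} \<subseteq> {..<n}" using assms nth_mem by (fastforce simp: lessThan_def)
  show "\<forall>(a,b)\<in>set (snd H). c (xs!a) (xs!b) = col" using assms(4) .
qed

lemma tri:
  assumes sym: "\<And>u v. u<n \<Longrightarrow> v<n \<Longrightarrow> u\<noteq>v \<Longrightarrow> c u v = c v u"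
  and lt: "a<n" "b<n" "x<n" "p<n" "q<n" "r<n"
  and d: "distinct [a,b,x]" "p\<notin>{a,b,x}" "q\<notin>{a,b,x}" "r\<notin>{a,b,x}"
  and col: "c a b = i" "c a x = i" "c b x = i" "c a p = i" "c b q = i" "c x r = i"
  shows "\<exists>H\<in>K4_star. mono_copy n c H"
proof -
  have xb: "c x b = i" "c b a = i" "c x a = i" using sym col lt d by auto
  consider "p = q" "q = r" | "p = q" "q \<noteq> r" | "p \<noteq> q" "p = r" | "p \<noteq> q" "q = r" "p \<noteq> r"
     | "p \<noteq> q" "q \<noteq> r" "p \<noteq> r" by blast
  then show ?thesis
  proof cases
    case 1
    have "mono_copy n c K4"
      by (rule mono_copyI[of "[a,b,x,p]" _ _ _ i]) (use lt d col 1 in \<open>auto simp: K4_def\<close>)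
    then show ?thesis unfolding K4_star_def by blast
  next
    case 2
    have "mono_copy n c K4_minus_pendant"
      by (rule mono_copyI[of "[a,b,x,p,r]" _ _ _ i]) (use lt d col 2 in \<open>auto simp: K4_minus_pendant_def\<close>)
    then show ?thesis unfolding K4_star_def by blast
  next
    case 3
    have "mono_copy n c K4_minus_pendant"
      by (rule mono_copyI[of "[a,x,b,p,q]" _ _ _ i]) (use lt d col xb 3 in \<open>auto simp: K4_minus_pendant_def\<close>)
    then show ?thesis unfolding K4_star_def by blast
  next
    case 4
    have "mono_copy n c K4_minus_pendant"
      by (rule mono_copyI[of "[b,x,a,q,p]" _ _ _ i]) (use lt d col xb 4 in \<open>auto simp: K4_minus_pendant_def\<close>)
    then show ?thesis unfolding K4_star_def by blast
  next
    case 5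
    have "mono_copy n c triangle_three_pendants"
      by (rule mono_copyI[of "[a,b,x,p,q,r]" _ _ _ i]) (use lt d col xb 5 in \<open>auto simp: triangle_three_pendants_def\<close>)
    then show ?thesis unfolding K4_star_def by blast
  qed
qed


lemma sum_ind_card: "finite A \<Longrightarrow> (\<Sum>x\<in>A. if P x then 1 else (0::nat)) = card {x\<in>A. P x}"
  by (simp add: sum.If_cases Int_def)

lemma edist: "H \<in> K4_star \<Longrightarrow> (a,b) \<in> set (snd H) \<Longrightarrow> a \<noteq> b \<and> a < fst H \<and> b < fst H"
  by (auto simp: K4_star_def K4_def K4_minus_pendant_def triangle_three_pendants_def)

lemma step:
  assumes k2: "k \<ge> 2" and Pm: "PP m (k-1)" and m3: "m \<ge> 3"
  shows "PP (k*m + k + 2) k"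
  unfolding PP_def
proof (intro allI impI, rule ccontr)
  fix c
  define n where "n = k*m+k+2"
  assume ec0: "edge_colouring (k*m+k+2) k c" and no0: "\<not>(\<exists>H\<in>K4_star. mono_copy (k*m+k+2) c H)"
  then have ec: "edge_colouring n k c" and no: "\<not>(\<exists>H\<in>K4_star. mono_copy n c H)" by (simp_all add: n_def)
  define V where "V = {..<n}"
  define Nb where "Nb i v = {u\<in>V. u\<noteq>v \<and> c v u = i}" for i v
  define L where "L i v = {a \<in> Nb i v. card (Nb i a) = 2}" for i v
  have sym: "\<And>u v. u<n \<Longrightarrow> v<n \<Longrightarrow> u\<noteq>v \<Longrightarrow> c u v = c v u"
    and ck: "\<And>u v. u<n \<Longrightarrow> v<n \<Longrightarrow> u\<noteq>v \<Longrightarrow> c u v < k"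
    using ec by (auto simp: edge_colouring_def)
  have finV: "finite V" by (simp add: V_def)
  have fin: "finite (Nb i v)" for i v by (simp add: Nb_def V_def)
  have NbV: "Nb i v \<subseteq> V" for i v by (auto simp: Nb_def)
  have LNb: "L i v \<subseteq> Nb i v" for i v by (auto simp: L_def)
  have noedge: "c a b \<noteq> i" if c3: "card (Nb i v) \<ge> 3" and vV: "v \<in> V" and aS: "a \<in> Nb i v - L i v"
    and bS: "b \<in> Nb i v - L i v" and ab: "a \<noteq> b" for i v a b
  proof
    assume cab: "c a b = i"
    have "card (Nb i v - {a,b}) \<ge> 1"
    proof -
      have "card (Nb i v) \<le> card (Nb i v - {a,b}) + card {a,b}"
      proof -
        have "Nb i v \<subseteq> (Nb i v - {a,b}) \<union> {a,b}" by blast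
        then have "card (Nb i v) \<le> card ((Nb i v - {a,b}) \<union> {a,b})" by (intro card_mono) (auto simp: fin)
        also have "\<dots> \<le> card (Nb i v - {a,b}) + card {a,b}" by (rule card_Un_le)
        finally show ?thesis .
      qed
      moreover have "card {a,b} \<le> 2" by (simp add: card_insert_if)
      ultimately show ?thesis using c3 by linarith
    qed
    then obtain w where w: "w \<in> Nb i v" "w \<notin> {a,b}"
      by (metis Diff_iff card_0_eq fin finite_Diff not_one_le_zero ex_in_conv)
    have aV: "a \<in> V" "b \<in> V" "v \<in> V" using aS bS vV NbV by auto
    have cva: "c v a = i" "c v b = i" "a \<noteq> v" "b \<noteq> v" using aS bS by (auto simp: Nb_def)
    have "\<exists>p\<in>Nb i a. p \<notin> {v,b}"
    proof (rule ccontr)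
      assume "\<not> ?thesis"
      then have "Nb i a \<subseteq> {v,b}" by auto
      moreover have "{v,b} \<subseteq> Nb i a" using aV cva cab sym ab by (auto simp: Nb_def V_def)
      ultimately have "Nb i a = {v,b}" by blast
      then have "card (Nb i a) = 2" using cva by simp
      then show False using aS by (auto simp: L_def)
    qed
    then obtain p where p: "p \<in> Nb i a" "p \<notin> {v,b}" by blast
    have "\<exists>q\<in>Nb i b. q \<notin> {v,a}"
    proof (rule ccontr)
      assume "\<not> ?thesis"
      then have "Nb i b \<subseteq> {v,a}" by auto
      moreover have "{v,a} \<subseteq> Nb i b" using aV cva cab sym ab by (auto simp: Nb_def V_def)
      ultimately have "Nb i b = {v,a}" by blast
      then have "card (Nb i b) = 2" using cva by simp
      then show False using bS by (auto simp: L_def)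
    qed
    then obtain q where q: "q \<in> Nb i b" "q \<notin> {v,a}" by blast
    have "\<exists>H\<in>K4_star. mono_copy n c H"
      apply (rule tri[where a=v and b=a and x=b and p=w and q=p and r=q and i=i])
      using sym aV w p q cva cab ab NbV by (auto simp: Nb_def V_def)
    then show False using no by blast
  qed
  have small: "card (Nb i v - L i v) < m" if c3: "card (Nb i v) \<ge> 3" and vV: "v \<in> V" and ik: "i < k" for i v
  proof (rule ccontr)
    define S where "S = Nb i v - L i v"
    assume "\<not> card (Nb i v - L i v) < m"
    then have "m \<le> card S" by (simp add: S_def)
    then obtain T where T: "T \<subseteq> S" "card T = m" by (meson obtain_subset_with_card_n)
    have finT: "finite T" using T fin finite_subset unfolding S_def by blast
    obtain g where g: "bij_betw g {..<m} T"
      using ex_bij_betw_nat_finite[OF finT] T(2) by (auto simp: atLeast0LessThan)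
    have gT: "u < m \<Longrightarrow> g u \<in> T" for u using g by (auto simp: bij_betw_def)
    have ginj: "inj_on g {..<m}" using g by (auto simp: bij_betw_def)
    have TS: "g u \<in> S" if "u < m" for u using gT T that by auto
    have gV: "g u < n" if "u < m" for u using TS[OF that] NbV unfolding S_def V_def by auto
    have gne: "g u \<noteq> g w" if "u<m" "w<m" "u\<noteq>w" for u w using ginj that by (auto dest: inj_onD)
    have cne: "c (g u) (g w) \<noteq> i" if "u<m" "w<m" "u\<noteq>w" for u w
      using noedge[OF c3 vV, of "g u" "g w"] TS that gne unfolding S_def by auto
    define \<psi> where "\<psi> j = (if j < i then j else j - 1)" for j :: nat
    define c' where "c' u w = \<psi> (c (g u) (g w))" for u w
    have ec': "edge_colouring m (k-1) c'"
      unfolding edge_colouring_def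
    proof (intro allI impI conjI)
      fix u w assume uw: "u < m" "w < m" "u \<noteq> w"
      show "c' u w = c' w u" unfolding c'_def using sym gV uw gne by metis
      have "c (g u) (g w) < k" using ck gV uw gne by blast
      then show "c' u w < k - 1" unfolding c'_def \<psi>_def using cne[OF uw] ik by auto
    qed
    then obtain H where H: "H \<in> K4_star" "mono_copy m c' H" using Pm unfolding PP_def by blast
    then obtain f col where f: "inj_on f {..<fst H}" "f ` {..<fst H} \<subseteq> {..<m}"
      "\<forall>(a,b)\<in>set (snd H). c' (f a) (f b) = col" unfolding mono_copy_def by blast
    have "mono_copy n c H"
      unfolding mono_copy_def
    proof (intro exI conjI)
      show "inj_on (g \<circ> f) {..<fst H}"
        using f(1,2) ginj by (meson comp_inj_on inj_on_subset)
      show "(g \<circ> f) ` {..<fst H} \<subseteq> {..<n}" using f(2) gV by auto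
      show "\<forall>(a,b)\<in>set (snd H). c ((g \<circ> f) a) ((g \<circ> f) b) = (if col < i then col else col + 1)"
      proof (intro ballI, clarify)
        fix a b assume ab: "(a,b) \<in> set (snd H)"
        have e: "a \<noteq> b" "a < fst H" "b < fst H" using edist[OF H(1) ab] by auto
        have fab: "f a < m" "f b < m" "f a \<noteq> f b" using f(1,2) e by (auto dest: inj_onD)
        have "c' (f a) (f b) = col" using f(3) ab by auto
        moreover have "c (g (f a)) (g (f b)) \<noteq> i" using cne fab by auto
        ultimately show "c ((g \<circ> f) a) ((g \<circ> f) b) = (if col < i then col else col + 1)"
          unfolding c'_def \<psi>_def by auto
      qed
    qed
    then show False using H(1) no by blast
  qed
  have degle: "card (Nb i v) \<le> (m-1) + card (L i v)" if "v \<in> V" "i < k" for i v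
  proof (cases "card (Nb i v) \<ge> 3")
    case True
    have "card (Nb i v) \<le> card (Nb i v - L i v) + card (L i v)"
      by (metis Diff_partition LNb Un_commute card_Un_le)
    then show ?thesis using small[OF True that] by linarith
  next
    case False then show ?thesis using m3 by linarith
  qed
  have degsum: "n - 1 \<le> (\<Sum>i<k. card (Nb i v))" if vV: "v \<in> V" for v
  proof -
    have "V - {v} \<subseteq> (\<Union>i<k. Nb i v)" using ck vV by (auto simp: Nb_def V_def)
    then have "card (V - {v}) \<le> card (\<Union>i<k. Nb i v)" by (intro card_mono) (auto simp: fin)
    also have "\<dots> \<le> (\<Sum>i<k. card (Nb i v))" by (rule card_UN_le) simp
    finally show ?thesis using vV by (simp add: V_def)
  qed
  have Lsum: "(\<Sum>v\<in>V. card (L i v)) \<le> 2*n" for i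
  proof -
    have "(\<Sum>v\<in>V. card (L i v)) = (\<Sum>v\<in>V. \<Sum>a\<in>V. if a \<in> L i v then 1 else (0::nat))"
    proof (rule sum.cong[OF refl])
      fix v assume "v \<in> V"
      have "{a\<in>V. a \<in> L i v} = L i v" using LNb NbV by blast
      then show "card (L i v) = (\<Sum>a\<in>V. if a \<in> L i v then 1 else 0)"
        using sum_ind_card[OF finV, of "\<lambda>a. a \<in> L i v"] by simp
    qed
    also have "\<dots> = (\<Sum>a\<in>V. \<Sum>v\<in>V. if a \<in> L i v then 1 else (0::nat))" by (rule sum.swap)
    also have "\<dots> \<le> (\<Sum>a\<in>V. 2)"
    proof (rule sum_mono)
      fix a assume aV: "a \<in> V"
      have "(\<Sum>v\<in>V. if a \<in> L i v then 1 else (0::nat)) = card {v\<in>V. a \<in> L i v}"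
        by (rule sum_ind_card[OF finV])
      also have "\<dots> \<le> 2"
      proof (cases "card (Nb i a) = 2")
        case True
        have "{v\<in>V. a \<in> L i v} \<subseteq> Nb i a" using sym aV by (auto simp: L_def Nb_def V_def)
        then show ?thesis using True card_mono[OF fin] by metis
      next
        case False then have "{v\<in>V. a \<in> L i v} = {}" by (auto simp: L_def)
        then show ?thesis by (simp only: card.empty)
      qed
      finally show "(\<Sum>v\<in>V. if a \<in> L i v then 1 else (0::nat)) \<le> 2" .
    qed
    also have "\<dots> = 2 * n" by (simp add: V_def)
    finally show ?thesis .
  qed
  have "\<exists>v\<in>V. (\<Sum>i<k. card (L i v)) \<le> 2*k"
  proof (rule ccontr)
    assume "\<not> ?thesis"
    then have gt: "\<And>v. v \<in> V \<Longrightarrow> 2*k < (\<Sum>i<k. card (L i v))" by auto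
    have Vne: "V \<noteq> {}" by (auto simp: V_def n_def)
    have "(\<Sum>v\<in>V. 2*k) < (\<Sum>v\<in>V. \<Sum>i<k. card (L i v))"
      by (rule sum_strict_mono[OF finV Vne gt])
    also have "\<dots> = (\<Sum>i<k. \<Sum>v\<in>V. card (L i v))" by (rule sum.swap)
    also have "\<dots> \<le> (\<Sum>i<k. 2*n)" by (rule sum_mono) (rule Lsum)
    finally show False by (simp add: V_def)
  qed
  then obtain v where vV: "v \<in> V" and Lv: "(\<Sum>i<k. card (L i v)) \<le> 2*k" by blast
  have "n - 1 \<le> (\<Sum>i<k. card (Nb i v))" by (rule degsum[OF vV])
  also have "\<dots> \<le> (\<Sum>i<k. (m-1) + card (L i v))" by (rule sum_mono) (use degle vV in auto)
  also have "\<dots> = k*(m-1) + (\<Sum>i<k. card (L i v))" by (simp add: sum.distrib)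
  also have "\<dots> \<le> k*(m-1) + 2*k" using Lv by simp
  finally have "n - 1 \<le> k*(m-1) + 2*k" .
  moreover have "k*(m-1) = k*m - k" by (simp add: diff_mult_distrib2)
  moreover have "k \<le> k*m" using m3 by simp
  ultimately show False unfolding n_def by linarith
qed


fun RB :: "nat \<Rightarrow> nat" where
  "RB 0 = 3"
| "RB (Suc 0) = 4"
| "RB (Suc (Suc k)) = Suc (Suc k) * RB (Suc k) + Suc (Suc k) + 2"

lemma RB_ge: "k \<ge> 1 \<Longrightarrow> RB k \<ge> 4"
  by (induction k rule: RB.induct) auto

lemma PP_1: "PP 4 1"
  unfolding PP_def
proof (intro allI impI)
  fix c assume ec: "edge_colouring 4 1 c"
  have "mono_copy 4 c K4"
    by (rule mono_copyI[of "[0,1,2,3]" _ _ _ 0]) (use ec in \<open>auto simp: K4_def edge_colouring_def\<close>)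
  then show "\<exists>H\<in>K4_star. mono_copy 4 c H" by (auto simp: K4_star_def)
qed

lemma PP_RB: "k \<ge> 1 \<Longrightarrow> PP (RB k) k"
proof (induction k rule: RB.induct)
  case 1 then show ?case by simp
next
  case 2 then show ?case using PP_1 by simp
next
  case (3 k)
  have "PP (Suc (Suc k) * RB (Suc k) + Suc (Suc k) + 2) (Suc (Suc k))"
    by (rule step) (use 3 RB_ge[of "Suc k"] in auto)
  then show ?case by simp
qed

lemma R_le: "k \<ge> 1 \<Longrightarrow> ramsey_family K4_star k \<le> RB k"
  unfolding ramsey_family_def using PP_RB[of k] unfolding PP_def by (rule Least_le)

lemma RB_bound:
  assumes e: "0 < \<epsilon>" "\<epsilon> < 1/4"
  shows "k \<ge> 1 \<Longrightarrow> real (RB k) \<le> (1 + \<epsilon>) ^ k * inverse \<epsilon> * fact k"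
proof (induction k rule: RB.induct)
  case 1 then show ?case by simp
next
  case 2
  have "4 \<le> inverse \<epsilon>" using e by (simp add: field_simps)
  also have "\<dots> \<le> (1+\<epsilon>) * inverse \<epsilon>" using e by (simp add: field_simps)
  finally show ?case by simp
next
  case (3 j)
  define F where "F k = (1 + \<epsilon>) ^ k * inverse \<epsilon> * fact k" for k
  show ?case
  proof (cases j)
    case 0
    have "12 * \<epsilon> \<le> 2 * (1+\<epsilon>)^2" 
    proof -
      have "0 \<le> \<epsilon>*\<epsilon>" by simp
      moreover have "2 * (1+\<epsilon>)^2 = 2 + 4*\<epsilon> + 2*(\<epsilon>*\<epsilon>)" by (simp add: power2_eq_square algebra_simps)
      ultimately show ?thesis using e by linarith
    qed
    then have "12 \<le> (1 + \<epsilon>) ^ 2 * inverse \<epsilon> * 2" using e by (simp add: field_simps)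
    then show ?thesis using 0 by (simp add: numeral_eq_Suc)
  next
    case (Suc j')
    have IH: "real (RB (Suc j)) \<le> F (Suc j)" using 3 by (simp add: F_def)
    have FF: "F (Suc (Suc j)) = real (Suc (Suc j)) * F (Suc j) + real (Suc (Suc j)) * (\<epsilon> * F (Suc j))"
      unfolding F_def using e by (simp add: fact_Suc[of "Suc j"] field_simps)
    have "\<epsilon> * F (Suc j) = (1+\<epsilon>)^(Suc j) * fact (Suc j)" unfolding F_def using e by (simp add: field_simps)
    also have "\<dots> \<ge> 1 * 2"
    proof (rule mult_mono)
      show "1 \<le> (1+\<epsilon>)^(Suc j)" using e by (intro one_le_power) simp
      have "Suc j \<le> fact (Suc j)" by (rule fact_ge_self)
      then have "real (Suc j) \<le> fact (Suc j)" by (metis of_nat_fact of_nat_le_iff)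
      moreover have "2 \<le> real (Suc j)" using Suc by simp
      ultimately show "2 \<le> (fact (Suc j) :: real)" by linarith
    qed (use e in auto)
    finally have ge2: "2 \<le> \<epsilon> * F (Suc j)" by simp
    have "real (RB (Suc (Suc j))) = real (Suc (Suc j)) * real (RB (Suc j)) + real (Suc (Suc j)) + 2" by (simp add: algebra_simps)
    also have "\<dots> \<le> real (Suc (Suc j)) * F (Suc j) + real (Suc (Suc j)) * 2"
    proof -
      have "real (Suc (Suc j)) * real (RB (Suc j)) \<le> real (Suc (Suc j)) * F (Suc j)"
        using IH by (intro mult_left_mono) auto
      moreover have "real (Suc (Suc j)) + 2 \<le> real (Suc (Suc j)) * 2" by simp
      ultimately show ?thesis by linarith
    qed
    also have "\<dots> \<le> F (Suc (Suc j))" unfolding FF using ge2 by (intro add_left_mono mult_left_mono) auto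
    finally show ?thesis by (simp add: F_def)
  qed
qed


theorem lemma1:
  shows "(\<forall>(\<epsilon>::real) (k::nat). 0 < \<epsilon> \<and> \<epsilon> < 1/4 \<and> k \<ge> 1 \<longrightarrow>
            real (ramsey_family K4_star k) \<le> (1 + \<epsilon>) ^ k * inverse \<epsilon> * fact k)
       \<and> (\<exists>g :: nat \<Rightarrow> real. g \<longlonglongrightarrow> 0 \<and>
            (\<forall>\<^sub>F k in sequentially.
               real (ramsey_family K4_star k) \<le> (real k - 1) * exp 1 * (1 + g k) * fact k))"
proof (intro conjI allI impI)
  have main: "real (ramsey_family K4_star k) \<le> (1 + \<epsilon>) ^ k * inverse \<epsilon> * fact k"
    if "0 < \<epsilon>" "\<epsilon> < 1/4" "k \<ge> 1" for \<epsilon> :: real and k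
  proof -
    have "real (ramsey_family K4_star k) \<le> real (RB k)" using R_le[OF that(3)] by simp
    also have "\<dots> \<le> (1 + \<epsilon>) ^ k * inverse \<epsilon> * fact k" by (rule RB_bound) (use that in auto)
    finally show ?thesis .
  qed
  then show "\<And>\<epsilon> k. 0 < \<epsilon> \<and> \<epsilon> < 1/4 \<and> k \<ge> 1 \<Longrightarrow>
      real (ramsey_family K4_star k) \<le> (1 + \<epsilon>) ^ k * inverse \<epsilon> * fact k" by blast
  define g where "g k = (1 + 1 / (real k - 1)) ^ k / exp 1 - 1" for k :: nat
  show "\<exists>g :: nat \<Rightarrow> real. g \<longlonglongrightarrow> 0 \<and>
            (\<forall>\<^sub>F k in sequentially.
               real (ramsey_family K4_star k) \<le> (real k - 1) * exp 1 * (1 + g k) * fact k)"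
  proof (intro exI conjI)
    have gs: "g (Suc n) = (1 + 1 / real n) ^ n * (1 + 1 / real n) / exp 1 - 1" for n
      by (simp add: g_def mult.commute)
    have "(\<lambda>n. (1 + 1 / real n) ^ n * (1 + 1 / real n) / exp 1 - 1) \<longlonglongrightarrow> exp 1 * (1 + 0) / exp 1 - 1"
      by (intro tendsto_intros tendsto_exp_limit_sequentially) auto
    then have "(\<lambda>n. g (Suc n)) \<longlonglongrightarrow> 0" unfolding gs by simp
    then show "g \<longlonglongrightarrow> 0" by (rule LIMSEQ_imp_Suc)
    show "\<forall>\<^sub>F k in sequentially.
               real (ramsey_family K4_star k) \<le> (real k - 1) * exp 1 * (1 + g k) * fact k"
    proof (rule eventually_sequentiallyI[of 6])
      fix k :: nat assume k6: "6 \<le> k"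
      define \<epsilon> where "\<epsilon> = 1 / (real k - 1)"
      have km: "real k - 1 \<ge> 5" using k6 by simp
      have e: "0 < \<epsilon>" "\<epsilon> < 1/4" using km by (auto simp: \<epsilon>_def field_simps)
      have "real (ramsey_family K4_star k) \<le> (1 + \<epsilon>) ^ k * inverse \<epsilon> * fact k"
        using main[OF e] k6 by simp
      also have "\<dots> = (real k - 1) * exp 1 * (1 + g k) * fact k"
        unfolding g_def \<epsilon>_def by simp
      finally show "real (ramsey_family K4_star k) \<le> (real k - 1) * exp 1 * (1 + g k) * fact k" .
    qed
  qed
qed

end
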